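(* Let $N\ge M\ge 1$, let $\beta$, $a$ (with Hölder exponent $\theta_1$), $f_0$ (with Hölder exponent $\theta_2$) and $dq_0$ be as in the context, with $dq_0$ satisfying condition (B) and $\int_{|z|<1}|z|^{\gamma}dq_0+\int_{|z|\ge1}|z|^{\gamma-1}dq_0<\infty$ ($\gamma=2$ in case (I), $\gamma=1$ in case (II)). For $\lambda>0$ let $v_\lambda$ be the periodic viscosity solution of (I) $\lambda v_\lambda-a(y)\int_{\mathbb{R}^M}[v_\lambda(y+\beta(z))-v_\lambda(y)-\langle\nabla v_\lambda(y),\beta(z)\rangle]dq_0(z)-f_0(y)=0$ in $\mathbb{T}^N$ (resp. (II), the same without the gradient term), and set $m_\lambda=\lambda v_\lambda$. Then: (i) there is a constant $M_0>0$ such that $\|m_\lambda\|_{L^\infty}\le M_0$ for all $\lambda\in(0,1)$; (ii) for every $\theta\in(0,\min\{\theta_1,\theta_2\})$ there is a constant $C_\theta>0$ such that $|m_\lambda(y)-m_\lambda(y')|\le C_\theta|y-y'|^{\theta}$ for all $y,y'\in\mathbb{T}^N$ and all $\lambda\in(0,1)$. The constants $M_0$ and $C_\theta$ do not depend on $\lambda\in(0,1)$.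
   Context: $\mathbb{T}^N=[0,1]^N$; functions on it are $\mathbb{Z}^N$-periodic on $\mathbb{R}^N$. $\beta:\mathbb{R}^M\to\mathbb{R}^N$ continuous, $\beta(cz)=c\beta(z)$ for $c>0$, $|\beta(z)|\le B_1|z|$. $a$ continuous, periodic, $a\ge a_0>0$, $|a(y)-a(y')|\le L|y-y'|^{\theta_1}$, $\theta_1\in(0,1]$. $f_0$ periodic with $|f_0(y)-f_0(y')|\le L|y-y'|^{\theta_2}$, $\theta_2\in(0,1]$. $dq_0$ positive Radon measure on $\mathbb{R}^M$. Condition (B): with $S_0=\mathrm{supp}(dq_0)$, for any $y,y'\in\mathbb{T}^N$ there exist $y_1=y,\dots,y_m=y'$ such that for any $\varepsilon_i>0$ there are $J_i\subset S_0$ with $y_i+\beta(z)\in B_{\varepsilon_i}(y_{i+1})$ (mod $\mathbb{Z}^N$) for $z\in J_i$ and $\int_{J_i}dq_0>0$. Viscosity solutions are understood via test functions: at a global max (resp. min) of $u-\phi$, $\phi\in C^2$, $u(\hat y)=\phi(\hat y)$, the equation holds with "$\le$" (resp. "$\ge$") when $\nabla u(\hat y)$ is replaced by $\nabla\phi(\hat y)$ in the (integrable) integrand. *)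

theory Defs
  imports "HOL-Analysis.Analysis"
begin

definition zperiodic :: "(real^'n \<Rightarrow> real) \<Rightarrow> bool" where
  "zperiodic u \<longleftrightarrow> (\<forall>y k. (\<forall>i. k $ i \<in> \<int>) \<longrightarrow> u (y + k) = u y)"

definition torus :: "(real^'n) set" where
  "torus = cbox 0 One"

definition is_C2 :: "(real^'n \<Rightarrow> real) \<Rightarrow> (real^'n \<Rightarrow> real^'n) \<Rightarrow> ('n \<Rightarrow> real^'n \<Rightarrow> real^'n) \<Rightarrow> bool" where
  "is_C2 \<phi> g h \<longleftrightarrow>
     (\<forall>x. (\<phi> has_derivative (\<lambda>v. g x \<bullet> v)) (at x)) \<and>
     (\<forall>x i. ((\<lambda>x. g x $ i) has_derivative (\<lambda>v. h i x \<bullet> v)) (at x)) \<and>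
     (\<forall>i. continuous_on UNIV (h i))"

text \<open>Integrand of the nonlocal operator; the flag grad selects case (I)
  (with gradient term) or case (II) (without).\<close>
definition nl_integrand ::
  "bool \<Rightarrow> (real^'m \<Rightarrow> real^'n) \<Rightarrow> (real^'n \<Rightarrow> real) \<Rightarrow> real^'n \<Rightarrow> real^'n \<Rightarrow> real^'m \<Rightarrow> real" where
  "nl_integrand grad \<beta> u p y z =
     u (y + \<beta> z) - u y - (if grad then p \<bullet> \<beta> z else 0)"

definition visc_sub ::
  "bool \<Rightarrow> (real^'m \<Rightarrow> real^'n) \<Rightarrow> (real^'n \<Rightarrow> real) \<Rightarrow> (real^'n \<Rightarrow> real) \<Rightarrow> (real^'m) measure
   \<Rightarrow> real \<Rightarrow> (real^'n \<Rightarrow> real) \<Rightarrow> bool" where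
  "visc_sub grad \<beta> a f q lam u \<longleftrightarrow>
    (\<forall>\<phi> g h yh. is_C2 \<phi> g h \<and> (\<forall>y. u y - \<phi> y \<le> u yh - \<phi> yh) \<and> u yh = \<phi> yh \<longrightarrow>
       integrable q (nl_integrand grad \<beta> u (g yh) yh) \<and>
       lam * u yh - a yh * (\<integral>z. nl_integrand grad \<beta> u (g yh) yh z \<partial>q) - f yh \<le> 0)"

definition visc_super ::
  "bool \<Rightarrow> (real^'m \<Rightarrow> real^'n) \<Rightarrow> (real^'n \<Rightarrow> real) \<Rightarrow> (real^'n \<Rightarrow> real) \<Rightarrow> (real^'m) measure
   \<Rightarrow> real \<Rightarrow> (real^'n \<Rightarrow> real) \<Rightarrow> bool" where
  "visc_super grad \<beta> a f q lam u \<longleftrightarrow>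
    (\<forall>\<phi> g h yh. is_C2 \<phi> g h \<and> (\<forall>y. u y - \<phi> y \<ge> u yh - \<phi> yh) \<and> u yh = \<phi> yh \<longrightarrow>
       integrable q (nl_integrand grad \<beta> u (g yh) yh) \<and>
       lam * u yh - a yh * (\<integral>z. nl_integrand grad \<beta> u (g yh) yh z \<partial>q) - f yh \<ge> 0)"

definition periodic_visc_sol ::
  "bool \<Rightarrow> (real^'m \<Rightarrow> real^'n) \<Rightarrow> (real^'n \<Rightarrow> real) \<Rightarrow> (real^'n \<Rightarrow> real) \<Rightarrow> (real^'m) measure
   \<Rightarrow> real \<Rightarrow> (real^'n \<Rightarrow> real) \<Rightarrow> bool" where
  "periodic_visc_sol grad \<beta> a f q lam u \<longleftrightarrow>
     continuous_on UNIV u \<and> zperiodic u \<and>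
     visc_sub grad \<beta> a f q lam u \<and> visc_super grad \<beta> a f q lam u"

definition msupport :: "(real^'m) measure \<Rightarrow> (real^'m) set" where
  "msupport q = {z. \<forall>e>0. emeasure q (ball z e) > 0}"

definition condB :: "(real^'m \<Rightarrow> real^'n) \<Rightarrow> (real^'m) measure \<Rightarrow> bool" where
  "condB \<beta> q \<longleftrightarrow>
    (\<forall>y \<in> torus. \<forall>y' \<in> torus. \<exists>ys. ys \<noteq> [] \<and> hd ys = y \<and> last ys = y' \<and>
       (\<forall>i. Suc i < length ys \<longrightarrow> (\<forall>e>0. \<exists>J. J \<in> sets q \<and> J \<subseteq> msupport q \<and>
           emeasure q J > 0 \<and>
           (\<forall>z\<in>J. \<exists>k. (\<forall>j. k $ j \<in> \<int>) \<and> dist (ys ! i + \<beta> z) (ys ! Suc i + k) < e))))"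

end

theory Submission
  imports Defs
begin

lemma torus_rep:
  fixes y :: "real^'n"
  shows "\<exists>k. (\<forall>i. k $ i \<in> \<int>) \<and> y - k \<in> torus"
proof -
  let ?k = "(\<chi> i. of_int \<lfloor>y $ i\<rfloor>) :: real^'n"
  have "y - ?k \<in> torus"
  proof -
    have fl: "0 \<le> r - of_int \<lfloor>r\<rfloor> \<and> r - of_int \<lfloor>r\<rfloor> \<le> 1" for r :: real
    proof -
      have "of_int \<lfloor>r\<rfloor> \<le> r" "r < of_int \<lfloor>r\<rfloor> + 1"
        by (rule of_int_floor_le, rule real_of_int_floor_add_one_gt)
      then show ?thesis by linarith
    qed
    have "\<forall>i. (0::real^'n) $ i \<le> (y - ?k) $ i \<and> (y - ?k) $ i \<le> (One::real^'n) $ i"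
      using fl by (simp add: Cart_1[symmetric] one_index)
    then show ?thesis unfolding torus_def mem_box_cart by blast
  qed
  then show ?thesis by (intro exI[of _ ?k]) auto
qed

lemma per_shift:
  assumes "zperiodic u" "\<forall>i. k $ i \<in> \<int>"
  shows "u (y - k) = u y"
  using assms unfolding zperiodic_def
  by (metis diff_add_cancel)

lemma is_C2_quad:
  fixes b :: "real^'n"
  shows "is_C2 (\<lambda>x. c + s * (norm (x - b))\<^sup>2) (\<lambda>x. (2 * s) *\<^sub>R (x - b)) (\<lambda>i x. (2 * s) *\<^sub>R axis i 1)"
  unfolding is_C2_def
proof (intro conjI allI)
  fix x :: "real^'n"
  show "((\<lambda>x. c + s * (norm (x - b))\<^sup>2) has_derivative (\<lambda>v. (2 * s) *\<^sub>R (x - b) \<bullet> v)) (at x)"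
  proof -
    have d1: "((\<lambda>x. x - b) has_derivative (\<lambda>v. v)) (at x)"
      by (auto intro!: derivative_eq_intros)
    have d2: "((\<lambda>x. (norm (x - b))\<^sup>2) has_derivative (\<lambda>v. 2 *\<^sub>R ((x - b) \<bullet> v))) (at x)"
      using has_derivative_compose[OF d1 has_derivative_sqnorm_at[of "x - b"]] by simp
    have d3: "((\<lambda>x. c + s * (norm (x - b))\<^sup>2) has_derivative (\<lambda>v. 0 + s * (2 *\<^sub>R ((x - b) \<bullet> v)))) (at x)"
      by (intro has_derivative_add has_derivative_const has_derivative_mult_right d2)
    show ?thesis using d3 by (simp add: algebra_simps)
  qed
next
  fix x :: "real^'n" and i
  show "((\<lambda>x. ((2 * s) *\<^sub>R (x - b)) $ i) has_derivative (\<lambda>v. (2 * s) *\<^sub>R axis i 1 \<bullet> v)) (at x)"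
  proof -
    have l: "((\<lambda>v. axis i (1::real) \<bullet> v) has_derivative (\<lambda>v. axis i 1 \<bullet> v)) (at x)"
      by (rule bounded_linear_imp_has_derivative[OF bounded_linear_inner_right])
    have "((\<lambda>v. (2 * s) * (axis i (1::real) \<bullet> v) - (2 * s) * b $ i) has_derivative (\<lambda>v. (2 * s) * (axis i 1 \<bullet> v) - 0)) (at x)"
      by (intro has_derivative_diff has_derivative_const has_derivative_mult_right l)
    then show ?thesis by (simp add: inner_axis' algebra_simps)
  qed
next
  fix i :: 'n show "continuous_on UNIV (\<lambda>x::real^'n. (2 * s) *\<^sub>R axis i (1::real))" by simp
qed

lemma is_C2_const: "is_C2 (\<lambda>x::real^'n. c) (\<lambda>x. 0) (\<lambda>i x. 0)"
  unfolding is_C2_def by (auto intro!: derivative_eq_intros)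

lemma per_max:
  fixes u :: "real^'n \<Rightarrow> real"
  assumes "continuous_on UNIV u" "zperiodic u"
  shows "\<exists>ym. \<forall>y. u y \<le> u ym"
proof -
  have "compact (torus :: (real^'n) set)" unfolding torus_def by simp
  moreover have "(0::real^'n) \<in> torus" unfolding torus_def mem_box_cart by (simp add: Cart_1[symmetric] one_index)
  then have "(torus :: (real^'n) set) \<noteq> {}" by blast
  moreover have "continuous_on torus u" using assms(1) by (rule continuous_on_subset) simp
  ultimately obtain ym where ym: "ym \<in> torus" "\<forall>y\<in>torus. u y \<le> u ym"
    using continuous_attains_sup by blast
  have "u y \<le> u ym" for y
  proof -
    obtain k where k: "\<forall>i. k $ i \<in> \<int>" "y - k \<in> torus" using torus_rep by blast
    have "u y = u (y - k)" using per_shift[OF assms(2) k(1)] by simp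
    also have "\<dots> \<le> u ym" using ym k by blast
    finally show ?thesis .
  qed
  then show ?thesis by blast
qed

lemma per_bounded:
  fixes f :: "real^'n \<Rightarrow> real"
  assumes "zperiodic f" "\<And>y y'. \<bar>f y - f y'\<bar> \<le> L * norm (y - y') powr \<theta>" "\<theta> \<ge> 0"
  shows "\<exists>F. \<forall>y. \<bar>f y\<bar> \<le> F"
proof -
  have "bounded (torus :: (real^'n) set)" unfolding torus_def by simp
  then obtain R where R: "\<forall>y\<in>(torus :: (real^'n) set). norm y \<le> R" unfolding bounded_iff by blast
  have "\<bar>f y\<bar> \<le> \<bar>f 0\<bar> + \<bar>L\<bar> * R powr \<theta>" for y
  proof -
    obtain k where k: "\<forall>i. k $ i \<in> \<int>" "y - k \<in> torus" using torus_rep by blast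
    have "f y = f (y - k)" using per_shift[OF assms(1) k(1)] by simp
    have "\<bar>f (y - k) - f 0\<bar> \<le> L * norm (y - k) powr \<theta>" using assms(2)[of "y - k" 0] by simp
    also have "\<dots> \<le> \<bar>L\<bar> * norm (y - k) powr \<theta>" by (simp add: mult_right_mono)
    also have "\<dots> \<le> \<bar>L\<bar> * R powr \<theta>"
      by (intro mult_left_mono powr_mono2) (use R k assms(3) in auto)
    finally show ?thesis using \<open>f y = f (y - k)\<close> by linarith
  qed
  then show ?thesis by blast
qed

lemma sub_bound:
  fixes u :: "real^'n \<Rightarrow> real"
  assumes sol: "periodic_visc_sol grad \<beta> a f q lam u"
    and apos: "\<And>y. a y > 0" and F: "\<And>y. f y \<le> F" and lam: "lam > 0"
  shows "lam * u y \<le> F"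
proof -
  have sub: "visc_sub grad \<beta> a f q lam u" and cu: "continuous_on UNIV u" and pu: "zperiodic u"
    using sol by (auto simp: periodic_visc_sol_def)
  obtain ym where ym: "\<forall>y. u y \<le> u ym" using per_max[OF cu pu] by blast
  have "is_C2 (\<lambda>x. u ym) (\<lambda>x. 0) (\<lambda>i x. 0) \<and> (\<forall>y. u y - (\<lambda>x. u ym) y \<le> u ym - (\<lambda>x. u ym) ym) \<and> u ym = (\<lambda>x. u ym) ym"
    using is_C2_const ym by auto
  then have R: "integrable q (nl_integrand grad \<beta> u ((\<lambda>x. 0) ym) ym) \<and>
       lam * u ym - a ym * (\<integral>z. nl_integrand grad \<beta> u ((\<lambda>x. 0) ym) ym z \<partial>q) - f ym \<le> 0"
    using sub unfolding visc_sub_def by blast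
  have "(\<integral>z. nl_integrand grad \<beta> u 0 ym z \<partial>q) \<le> (\<integral>z. 0 \<partial>q)"
  proof (rule integral_mono)
    show "integrable q (nl_integrand grad \<beta> u 0 ym)" using R by simp
  qed (auto simp: nl_integrand_def ym)
  then have "(\<integral>z. nl_integrand grad \<beta> u 0 ym z \<partial>q) \<le> 0" by simp
  then have "a ym * (\<integral>z. nl_integrand grad \<beta> u 0 ym z \<partial>q) \<le> 0"
    using apos[of ym] by (simp add: mult_nonneg_nonpos)
  then have "lam * u ym \<le> F" using R F[of ym] by simp
  moreover have "lam * u y \<le> lam * u ym" using ym lam by (simp add: mult_left_mono)
  ultimately show ?thesis by linarith
qed

lemma super_bound:
  fixes u :: "real^'n \<Rightarrow> real"
  assumes sol: "periodic_visc_sol grad \<beta> a f q lam u"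
    and apos: "\<And>y. a y > 0" and F: "\<And>y. f y \<ge> - F" and lam: "lam > 0"
  shows "lam * u y \<ge> - F"
proof -
  have sup: "visc_super grad \<beta> a f q lam u" and cu: "continuous_on UNIV u" and pu: "zperiodic u"
    using sol by (auto simp: periodic_visc_sol_def)
  have cu': "continuous_on UNIV (\<lambda>x. - u x)" using cu by (intro continuous_intros)
  have pu': "zperiodic (\<lambda>x. - u x)" using pu by (simp add: zperiodic_def)
  obtain ym where ym0: "\<forall>y. - u y \<le> - u ym" using per_max[OF cu' pu'] by blast
  then have ym: "\<forall>y. u ym \<le> u y" by auto
  have "is_C2 (\<lambda>x. u ym) (\<lambda>x. 0) (\<lambda>i x. 0) \<and> (\<forall>y. u y - (\<lambda>x. u ym) y \<ge> u ym - (\<lambda>x. u ym) ym) \<and> u ym = (\<lambda>x. u ym) ym"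
    using is_C2_const ym by auto
  then have R: "integrable q (nl_integrand grad \<beta> u ((\<lambda>x. 0) ym) ym) \<and>
       lam * u ym - a ym * (\<integral>z. nl_integrand grad \<beta> u ((\<lambda>x. 0) ym) ym z \<partial>q) - f ym \<ge> 0"
    using sup unfolding visc_super_def by blast
  have "(\<integral>z. 0 \<partial>q) \<le> (\<integral>z. nl_integrand grad \<beta> u 0 ym z \<partial>q)"
  proof (rule integral_mono)
    show "integrable q (nl_integrand grad \<beta> u 0 ym)" using R by simp
  qed (auto simp: nl_integrand_def ym)
  then have "(\<integral>z. nl_integrand grad \<beta> u 0 ym z \<partial>q) \<ge> 0" by simp
  then have "a ym * (\<integral>z. nl_integrand grad \<beta> u 0 ym z \<partial>q) \<ge> 0"
    using apos[of ym] by simp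
  then have "lam * u ym \<ge> - F" using R F[of ym] by simp
  moreover have "lam * u y \<ge> lam * u ym" using ym lam by (simp add: mult_left_mono)
  ultimately show ?thesis by linarith
qed

lemma hoelder_core:
  fixes u :: "real^'n \<Rightarrow> real" and h x :: "real^'n"
  assumes sol: "periodic_visc_sol grad \<beta> a f q lam u" and lam: "lam > 0"
    and M0: "M0 > 0" "\<And>y. \<bar>lam * u y\<bar> \<le> M0"
    and F: "\<And>y. \<bar>f y\<bar> \<le> F"
    and a0: "a0 > 0" "\<And>y. a y \<ge> a0"
    and h: "h \<noteq> 0"
  shows "\<exists>x1 w. norm w \<le> 3 * norm h \<and>
           lam * u x - lam * u (x - h) \<le> \<bar>f x1 - f (x1 - w)\<bar> + \<bar>a x1 - a (x1 - w)\<bar> * ((M0 + F) / a0)"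
proof -
  have sub: "visc_sub grad \<beta> a f q lam u" and sup: "visc_super grad \<beta> a f q lam u"
    and cu: "continuous_on UNIV u" and pu: "zperiodic u"
    using sol by (auto simp: periodic_visc_sol_def)
  have ub: "\<bar>u y\<bar> \<le> M0 / lam" for y
    using M0(2)[of y] lam by (simp add: abs_mult field_simps)
  have nh: "norm h > 0" using h by simp
  define s where "s = 2 * M0 / (lam * (norm h)\<^sup>2)"
  have s: "s > 0" unfolding s_def using M0 lam nh by simp
  define G where "G = (\<lambda>x w. u x - u (x - w) - s * (norm (w - h))\<^sup>2)"
  define S where "S = (torus :: (real^'n) set) \<times> cball h (2 * norm h)"
  have "compact S" unfolding S_def torus_def by (intro compact_Times) auto
  moreover have "(0::real^'n) \<in> torus" unfolding torus_def mem_box_cart by (simp add: Cart_1[symmetric] one_index)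
  then have S0: "(0, h) \<in> S" unfolding S_def by simp
  then have "S \<noteq> {}" by blast
  moreover have "continuous_on S (\<lambda>p. G (fst p) (snd p))"
    unfolding G_def
    by (intro continuous_intros continuous_on_compose2[OF cu]) auto
  ultimately obtain p where pS: "p \<in> S" and pmax: "\<forall>p'\<in>S. G (fst p') (snd p') \<le> G (fst p) (snd p)"
    using continuous_attains_sup by blast
  define xh where "xh = fst p"
  define wh where "wh = snd p"
  define Gm where "Gm = G xh wh"
  have G0: "G 0 h \<le> Gm" using pmax S0 unfolding Gm_def xh_def wh_def by force
  have Gup: "G x w \<le> 2 * M0 / lam - s * (norm (w - h))\<^sup>2" for x w
    using ub[of x] ub[of "x - w"] unfolding G_def by (simp add: abs_le_iff)
  have Glow: "G x h \<ge> - 2 * M0 / lam" for x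
    using ub[of x] ub[of "x - h"] unfolding G_def by (simp add: abs_le_iff)
  have glob: "G x w \<le> Gm" for x w
  proof (cases "norm (w - h) \<le> 2 * norm h")
    case True
    obtain k where k: "\<forall>i. k $ i \<in> \<int>" "x - k \<in> torus" using torus_rep by blast
    have "G x w = G (x - k) w"
      unfolding G_def using per_shift[OF pu k(1), of x] per_shift[OF pu k(1), of "x - w"]
      by (simp add: algebra_simps)
    moreover have "(x - k, w) \<in> S" unfolding S_def using k True by (simp add: dist_norm norm_minus_commute)
    ultimately show ?thesis using pmax unfolding Gm_def xh_def wh_def by force
  next
    case False
    then have "(norm (w - h))\<^sup>2 \<ge> (2 * norm h)\<^sup>2"
      by (intro power_mono) auto
    then have "s * (norm (w - h))\<^sup>2 \<ge> s * (2 * norm h)\<^sup>2" using s by (simp add: mult_left_mono)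
    moreover have "s * (2 * norm h)\<^sup>2 = 4 * (2 * M0 / lam)" unfolding s_def using nh by (simp add: field_simps power2_eq_square)
    ultimately have "G x w \<le> - (2 * M0 / lam)" using Gup[of x w] divide_pos_pos[OF mult_pos_pos[OF _ M0(1)] lam, of 2]
      by linarith
    then show ?thesis using Glow[of 0] G0 by (simp add: field_simps)
  qed
  have whb: "norm (wh - h) \<le> 2 * norm h" using pS unfolding S_def wh_def by (auto simp: dist_norm norm_minus_commute)
  then have wh3: "norm wh \<le> 3 * norm h" using norm_triangle_ineq[of "wh - h" h] by simp
  define yh where "yh = xh - wh"
  define p0 where "p0 = (2 * s) *\<^sub>R (xh - (yh + h))"
  define phi where "phi = (\<lambda>x. (u yh + Gm) + s * (norm (x - (yh + h)))\<^sup>2)"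
  have c1: "is_C2 phi (\<lambda>x. (2 * s) *\<^sub>R (x - (yh + h))) (\<lambda>i x. (2 * s) *\<^sub>R axis i 1)"
    unfolding phi_def by (rule is_C2_quad)
  have e1: "u y - phi y = G y (y - yh) - Gm" for y
    unfolding phi_def G_def by (simp add: algebra_simps)
  have e1': "u xh = phi xh"
    unfolding phi_def Gm_def G_def yh_def by (simp add: algebra_simps)
  have "is_C2 phi (\<lambda>x. (2 * s) *\<^sub>R (x - (yh + h))) (\<lambda>i x. (2 * s) *\<^sub>R axis i 1) \<and>
        (\<forall>y. u y - phi y \<le> u xh - phi xh) \<and> u xh = phi xh"
    using c1 e1 e1' glob by auto
  then have R1: "integrable q (nl_integrand grad \<beta> u ((\<lambda>x. (2 * s) *\<^sub>R (x - (yh + h))) xh) xh) \<and>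
       lam * u xh - a xh * (\<integral>z. nl_integrand grad \<beta> u ((\<lambda>x. (2 * s) *\<^sub>R (x - (yh + h))) xh) xh z \<partial>q) - f xh \<le> 0"
    using sub unfolding visc_sub_def by blast
  define psi where "psi = (\<lambda>y. (u xh - Gm) + (- s) * (norm (y - (xh - h)))\<^sup>2)"
  have c2: "is_C2 psi (\<lambda>x. (2 * (- s)) *\<^sub>R (x - (xh - h))) (\<lambda>i x. (2 * (- s)) *\<^sub>R axis i 1)"
    unfolding psi_def by (rule is_C2_quad)
  have e2: "u y - psi y = Gm - G xh (xh - y)" for y
    unfolding psi_def G_def by (simp add: algebra_simps norm_minus_commute)
  have e2': "u yh = psi yh"
    unfolding psi_def Gm_def G_def yh_def by (simp add: algebra_simps norm_minus_commute)
  have "is_C2 psi (\<lambda>x. (2 * (- s)) *\<^sub>R (x - (xh - h))) (\<lambda>i x. (2 * (- s)) *\<^sub>R axis i 1) \<and>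
        (\<forall>y. u y - psi y \<ge> u yh - psi yh) \<and> u yh = psi yh"
    using c2 e2 e2' glob by auto
  then have R2: "integrable q (nl_integrand grad \<beta> u ((\<lambda>x. (2 * (- s)) *\<^sub>R (x - (xh - h))) yh) yh) \<and>
       lam * u yh - a yh * (\<integral>z. nl_integrand grad \<beta> u ((\<lambda>x. (2 * (- s)) *\<^sub>R (x - (xh - h))) yh) yh z \<partial>q) - f yh \<ge> 0"
    using sup unfolding visc_super_def by blast
  have pe1: "(\<lambda>x. (2 * s) *\<^sub>R (x - (yh + h))) xh = p0" unfolding p0_def by simp
  have pe2: "(\<lambda>x. (2 * (- s)) *\<^sub>R (x - (xh - h))) yh = p0" unfolding p0_def by (simp add: algebra_simps)
  define I1 where "I1 = (\<integral>z. nl_integrand grad \<beta> u p0 xh z \<partial>q)"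
  define I2 where "I2 = (\<integral>z. nl_integrand grad \<beta> u p0 yh z \<partial>q)"
  have i1: "integrable q (nl_integrand grad \<beta> u p0 xh)" and r1: "lam * u xh - a xh * I1 - f xh \<le> 0"
    using R1 unfolding pe1 I1_def by auto
  have i2: "integrable q (nl_integrand grad \<beta> u p0 yh)" and r2: "lam * u yh - a yh * I2 - f yh \<ge> 0"
    using R2 unfolding pe2 I2_def by auto
  have pw: "nl_integrand grad \<beta> u p0 xh z \<le> nl_integrand grad \<beta> u p0 yh z" for z
  proof -
    have "G (xh + \<beta> z) wh \<le> Gm" by (rule glob)
    then have "u (xh + \<beta> z) - u (yh + \<beta> z) \<le> u xh - u yh"
      unfolding G_def Gm_def yh_def by (simp add: algebra_simps)
    then show ?thesis unfolding nl_integrand_def by simp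
  qed
  have I12: "I1 \<le> I2" unfolding I1_def I2_def using i1 i2 pw by (intro integral_mono) auto
  define m1 where "m1 = lam * u xh"
  define m2 where "m2 = lam * u yh"
  have a1: "a xh > 0" and a2: "a yh > 0" using a0 by (auto intro: less_le_trans)
  have "m1 - f xh \<le> a xh * I1" using r1 unfolding m1_def by simp
  also have "\<dots> \<le> a xh * I2" using I12 a1 by (simp add: mult_left_mono)
  finally have st1: "m1 - f xh \<le> a xh * I2" .
  have st2: "I2 \<le> (m2 - f yh) / a yh" using r2 a2 unfolding m2_def by (simp add: field_simps)
  have "m1 \<le> f xh + a xh * ((m2 - f yh) / a yh)"
  proof -
    have "a xh * I2 \<le> a xh * ((m2 - f yh) / a yh)" by (rule mult_left_mono[OF st2]) (use a1 in simp)
    then show ?thesis using st1 by linarith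
  qed
  then have st3: "m1 - m2 \<le> (f xh - f yh) + (a xh - a yh) * ((m2 - f yh) / a yh)"
    using a2 by (simp add: field_simps)
  have "\<bar>m2 - f yh\<bar> \<le> M0 + F" using M0(2)[of yh] F[of yh] unfolding m2_def by linarith
  moreover have "\<bar>(m2 - f yh) / a yh\<bar> = \<bar>m2 - f yh\<bar> / a yh" using a2 by simp
  moreover have "\<bar>m2 - f yh\<bar> / a yh \<le> (M0 + F) / a0"
  proof (rule frac_le)
    show "0 \<le> M0 + F" using calculation(1) by (meson abs_ge_zero order_trans)
  qed (use calculation(1) a0 in auto)
  ultimately have "\<bar>(m2 - f yh) / a yh\<bar> \<le> (M0 + F) / a0" by linarith
  then have "(a xh - a yh) * ((m2 - f yh) / a yh) \<le> \<bar>a xh - a yh\<bar> * ((M0 + F) / a0)"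
  proof -
    have "(a xh - a yh) * ((m2 - f yh) / a yh) \<le> \<bar>(a xh - a yh) * ((m2 - f yh) / a yh)\<bar>" by (rule abs_ge_self)
    also have "\<dots> = \<bar>a xh - a yh\<bar> * \<bar>(m2 - f yh) / a yh\<bar>" by (rule abs_mult)
    also have "\<dots> \<le> \<bar>a xh - a yh\<bar> * ((M0 + F) / a0)" by (rule mult_left_mono[OF \<open>\<bar>(m2 - f yh) / a yh\<bar> \<le> (M0 + F) / a0\<close> abs_ge_zero])
    finally show ?thesis .
  qed
  then have st4: "m1 - m2 \<le> \<bar>f xh - f (xh - wh)\<bar> + \<bar>a xh - a (xh - wh)\<bar> * ((M0 + F) / a0)"
    using st3 unfolding yh_def by linarith
  have "G x h \<le> Gm" by (rule glob)
  then have "u x - u (x - h) \<le> u xh - u yh"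
  proof -
    have "s * (norm (wh - h))\<^sup>2 \<ge> 0" using s by simp
    then show ?thesis using \<open>G x h \<le> Gm\<close> unfolding G_def Gm_def yh_def wh_def by simp
  qed
  then have "lam * u x - lam * u (x - h) \<le> m1 - m2"
    unfolding m1_def m2_def using lam by (simp add: right_diff_distrib[symmetric] mult_left_mono)
  then show ?thesis using st4 wh3 by (intro exI[of _ xh] exI[of _ wh]) auto
qed

lemma powr_interp:
  fixes w d D t ti :: real
  assumes "0 < d" "d \<le> D" "0 \<le> t" "t \<le> ti" "0 \<le> w" "w \<le> d"
  shows "w powr ti \<le> D powr (ti - t) * d powr t"
proof -
  have "w powr ti \<le> d powr ti" using assms by (intro powr_mono2) auto
  also have "\<dots> = d powr (ti - t) * d powr t" by (simp add: powr_add[symmetric])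
  also have "\<dots> \<le> D powr (ti - t) * d powr t"
    using assms by (intro mult_right_mono powr_mono2) auto
  finally show ?thesis .
qed

theorem lemma3p2:
  fixes \<beta> :: "real^'m \<Rightarrow> real^'n"
    and a f0 :: "real^'n \<Rightarrow> real"
    and q :: "(real^'m) measure"
    and v :: "real \<Rightarrow> real^'n \<Rightarrow> real"
    and grad :: bool
    and B1 a0 L \<theta>1 \<theta>2 :: real
  assumes dims: "CARD('m) \<le> CARD('n)"
    and beta_cont: "continuous_on UNIV \<beta>"
    and beta_hom: "\<And>c z. c > 0 \<Longrightarrow> \<beta> (c *\<^sub>R z) = c *\<^sub>R \<beta> z"
    and beta_bd: "\<And>z. norm (\<beta> z) \<le> B1 * norm z"
    and a_cont: "continuous_on UNIV a" and a_per: "zperiodic a"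
    and a0: "a0 > 0" and a_low: "\<And>y. a y \<ge> a0"
    and th1: "0 < \<theta>1" "\<theta>1 \<le> 1"
    and a_hoel: "\<And>y y'. \<bar>a y - a y'\<bar> \<le> L * norm (y - y') powr \<theta>1"
    and f_per: "zperiodic f0"
    and th2: "0 < \<theta>2" "\<theta>2 \<le> 1"
    and f_hoel: "\<And>y y'. \<bar>f0 y - f0 y'\<bar> \<le> L * norm (y - y') powr \<theta>2"
    and q_borel: "sets q = sets borel"
    and q_locfin: "\<And>K. compact K \<Longrightarrow> 0 \<notin> K \<Longrightarrow> emeasure q K < \<infinity>"
    and q_B: "condB \<beta> q"
    and q_moment: "(\<integral>\<^sup>+ z. ennreal (if norm z < 1 then norm z ^ (if grad then 2 else 1)
                                  else norm z ^ ((if grad then 2 else 1) - 1)) \<partial>q) < \<infinity>"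
    and v_sol: "\<And>lam. lam > 0 \<Longrightarrow> periodic_visc_sol grad \<beta> a f0 q lam (v lam)"
  shows "(\<exists>M0>0. \<forall>lam\<in>{0<..<1}. \<forall>y. \<bar>lam * v lam y\<bar> \<le> M0) \<and>
         (\<forall>\<theta>. 0 < \<theta> \<and> \<theta> < min \<theta>1 \<theta>2 \<longrightarrow>
            (\<exists>C>0. \<forall>lam\<in>{0<..<1}. \<forall>y\<in>torus. \<forall>y'\<in>torus.
               \<bar>lam * v lam y - lam * v lam y'\<bar> \<le> C * norm (y - y') powr \<theta>))"
proof -
  have "(1::real^'n) \<noteq> 0" by (metis one_index zero_index zero_neq_one)
  then have n1: "norm (1::real^'n) > 0" by simp
  have "0 \<le> L * norm ((1::real^'n) - 0) powr \<theta>1" using a_hoel[of 1 0] by (meson abs_ge_zero order_trans)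
  then have L: "L \<ge> 0" using n1 by (simp add: zero_le_mult_iff)
  obtain F where F: "\<And>y. \<bar>f0 y\<bar> \<le> F" using per_bounded[OF f_per f_hoel] th2 by force
  have apos: "\<And>y. a y > 0" using a0 a_low by (auto intro: less_le_trans)
  define M0 where "M0 = F + 1"
  have F0: "F \<ge> 0" using F[of 0] by linarith
  have M0p: "M0 > 0" unfolding M0_def using F0 by simp
  have Mb: "\<bar>lam * v lam y\<bar> \<le> M0" if "lam > 0" for lam y
  proof -
    have "lam * v lam y \<le> F"
      by (rule sub_bound[OF v_sol[OF that] apos]) (use F that in \<open>auto simp: abs_le_iff\<close>)
    moreover have "lam * v lam y \<ge> - F"
      by (rule super_bound[OF v_sol[OF that] apos]) (use F that in \<open>auto simp: abs_le_iff minus_le_iff\<close>)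
    ultimately show ?thesis unfolding M0_def by simp
  qed
  have part1: "\<exists>M0>0. \<forall>lam\<in>{0<..<1}. \<forall>y. \<bar>lam * v lam y\<bar> \<le> M0"
    using M0p Mb by auto
  have part2: "\<exists>C>0. \<forall>lam\<in>{0<..<1}. \<forall>y\<in>torus. \<forall>y'\<in>torus.
               \<bar>lam * v lam y - lam * v lam y'\<bar> \<le> C * norm (y - y') powr \<theta>"
    if th: "0 < \<theta>" "\<theta> < min \<theta>1 \<theta>2" for \<theta>
  proof -
    have "bounded (torus :: (real^'n) set)" unfolding torus_def by simp
    then obtain R where R: "\<forall>y\<in>(torus :: (real^'n) set). norm y \<le> R" unfolding bounded_iff by blast
    define D where "D = max 1 (6 * R)"
    define K where "K = (M0 + F) / a0"
    have K0: "K \<ge> 0" unfolding K_def using M0p F0 a0 by simp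
    define C where "C = (L * D powr (\<theta>2 - \<theta>) + L * K * D powr (\<theta>1 - \<theta>)) * 3 powr \<theta> + 1"
    have Cp: "C > 0" unfolding C_def using L K0 by (intro add_nonneg_pos mult_nonneg_nonneg add_nonneg_nonneg) auto
    have one: "lam * v lam y - lam * v lam y' \<le> C * norm (y - y') powr \<theta>"
      if lam: "lam > 0" and yt: "y \<in> torus" "y' \<in> torus" "y \<noteq> y'" for lam and y y' :: "real^'n"
    proof -
      define h where "h = y - y'"
      have h0: "h \<noteq> 0" using yt unfolding h_def by simp
      obtain x1 w where w: "norm w \<le> 3 * norm h"
        and dw: "lam * v lam y - lam * v lam (y - h) \<le> \<bar>f0 x1 - f0 (x1 - w)\<bar> + \<bar>a x1 - a (x1 - w)\<bar> * ((M0 + F) / a0)"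
        using hoelder_core[OF v_sol[OF lam] lam M0p Mb[OF lam] F a0 a_low h0, of y] by blast
      have yh: "y - h = y'" unfolding h_def by simp
      define d where "d = 3 * norm h"
      have d0: "d > 0" unfolding d_def using h0 by simp
      have "norm h \<le> norm y + norm y'" unfolding h_def by (rule norm_triangle_ineq4)
      moreover have "norm y \<le> R" "norm y' \<le> R" using R yt by auto
      ultimately have dD: "d \<le> D" unfolding d_def D_def by linarith
      have p2: "norm w powr \<theta>2 \<le> D powr (\<theta>2 - \<theta>) * d powr \<theta>"
        by (rule powr_interp) (use d0 dD th w d_def in auto)
      have p1: "norm w powr \<theta>1 \<le> D powr (\<theta>1 - \<theta>) * d powr \<theta>"
        by (rule powr_interp) (use d0 dD th w d_def in auto)
      have "\<bar>f0 x1 - f0 (x1 - w)\<bar> \<le> L * norm w powr \<theta>2" using f_hoel[of x1 "x1 - w"] by simp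
      also have "\<dots> \<le> L * (D powr (\<theta>2 - \<theta>) * d powr \<theta>)" using p2 L by (rule mult_left_mono)
      finally have b2: "\<bar>f0 x1 - f0 (x1 - w)\<bar> \<le> L * (D powr (\<theta>2 - \<theta>) * d powr \<theta>)" .
      have "\<bar>a x1 - a (x1 - w)\<bar> \<le> L * norm w powr \<theta>1" using a_hoel[of x1 "x1 - w"] by simp
      also have "\<dots> \<le> L * (D powr (\<theta>1 - \<theta>) * d powr \<theta>)" using p1 L by (rule mult_left_mono)
      finally have "\<bar>a x1 - a (x1 - w)\<bar> * K \<le> L * (D powr (\<theta>1 - \<theta>) * d powr \<theta>) * K"
        using K0 by (rule mult_right_mono)
      with b2 dw have "lam * v lam y - lam * v lam y' \<le>
          (L * D powr (\<theta>2 - \<theta>) + L * K * D powr (\<theta>1 - \<theta>)) * d powr \<theta>"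
        unfolding yh K_def by (simp add: algebra_simps)
      also have "d powr \<theta> = 3 powr \<theta> * norm h powr \<theta>" unfolding d_def by (simp add: powr_mult)
      also have "(L * D powr (\<theta>2 - \<theta>) + L * K * D powr (\<theta>1 - \<theta>)) * (3 powr \<theta> * norm h powr \<theta>)
          \<le> C * norm h powr \<theta>" unfolding C_def by (simp add: algebra_simps)
      finally show ?thesis unfolding h_def .
    qed
    show ?thesis
    proof (intro exI[of _ C] conjI Cp ballI)
      fix lam and y y' :: "real^'n" assume lam: "lam \<in> {0<..<1::real}" and yt: "y \<in> torus" "y' \<in> torus"
      show "\<bar>lam * v lam y - lam * v lam y'\<bar> \<le> C * norm (y - y') powr \<theta>"
      proof (cases "y = y'")
        case True then show ?thesis by simp
      next
        case False
        have "lam * v lam y - lam * v lam y' \<le> C * norm (y - y') powr \<theta>"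
          using one lam yt False by auto
        moreover have "lam * v lam y' - lam * v lam y \<le> C * norm (y' - y) powr \<theta>"
          using one lam yt False by auto
        ultimately show ?thesis by (simp add: norm_minus_commute abs_le_iff)
      qed
    qed
  qed
  show ?thesis using part1 part2 by blast
qed

end
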